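(* Partially synchronous Streamlet with $n$ validators provides $\frac{1}{3}$-accountable safety with respect to the Streamlet slashing conditions.
   Context: Streamlet: time is divided into epochs, each with a leader. The leader of epoch $e$ proposes a block extending one of the longest notarized chains it has seen; a validator votes (at most once per epoch) for the leader's proposal if it extends one of the longest notarized chains the validator has seen. A block is notarized once it has votes from at least $2n/3$ validators. If a notarized chain contains three adjacent blocks from consecutive epochs $e-1,e,e+1$, then the block of epoch $e$ and its prefix are finalized. For a block $B$, $e_B$ denotes its epoch and $|B|$ its depth. Streamlet slashing conditions: a validator violates a slashing condition if (1) it votes for two blocks $B_1,B_2$ with $e_{B_1}=e_{B_2}$, or (2) it votes for $B_1,B_2$ with $e_{B_1}<e_{B_2}$ but $|B_1|>|B_2|$. A protocol provides $\alpha$-accountable safety if (1) in the case of a safety violation of the produced ledger, at least $\alpha n$ validators can be irrefutably accused, in particular shown to have violated a slashing condition, and (2) honest validators never violate the slashing conditions. *)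

theory Defs
  imports Complex_Main "HOL-Library.Sublist"
begin

text \<open>A block is identified with the chain of (epoch, payload) entries leading to it from
  the genesis block; the genesis block is the empty list. The genesis block has epoch 0; protocol epochs are 1, 2, ...\<close>

type_synonym 'p block = "(nat \<times> 'p) list"

definition genesis :: "'p block" where
  "genesis = []"

definition parent :: "'p block \<Rightarrow> 'p block" where
  "parent B = butlast B"

definition depth :: "'p block \<Rightarrow> nat" where
  "depth B = length B"

definition epoch :: "'p block \<Rightarrow> nat" where
  "epoch B = (if B = [] then 0 else fst (last B))"

definition conflicting :: "'p block \<Rightarrow> 'p block \<Rightarrow> bool" where
  "conflicting B B' \<longleftrightarrow> \<not> prefix B B' \<and> \<not> prefix B' B"

text \<open>V is the set of the n validators, votes is the set of all (signed) votes cast during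
  the execution: (v, B) means validator v voted for block B.\<close>

definition notarized :: "'v set \<Rightarrow> ('v \<times> 'p block) set \<Rightarrow> 'p block \<Rightarrow> bool" where
  "notarized V votes B \<longleftrightarrow> 3 * card {v \<in> V. (v, B) \<in> votes} \<ge> 2 * card V"

definition notarized_chain :: "'v set \<Rightarrow> ('v \<times> 'p block) set \<Rightarrow> 'p block \<Rightarrow> bool" where
  "notarized_chain V votes B \<longleftrightarrow>
     (\<forall>C. prefix C B \<longrightarrow> C \<noteq> genesis \<longrightarrow> notarized V votes C)"

definition finalizing_middle :: "'v set \<Rightarrow> ('v \<times> 'p block) set \<Rightarrow> 'p block \<Rightarrow> bool" where
  "finalizing_middle V votes B \<longleftrightarrow> B \<noteq> genesis \<and>
     (\<exists>C. notarized_chain V votes C \<and> C \<noteq> genesis \<and> parent C = B \<and>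
          epoch (parent B) + 1 = epoch B \<and> epoch B + 1 = epoch C)"

definition finalized :: "'v set \<Rightarrow> ('v \<times> 'p block) set \<Rightarrow> 'p block \<Rightarrow> bool" where
  "finalized V votes B \<longleftrightarrow> (\<exists>M. finalizing_middle V votes M \<and> prefix B M)"

definition safety_violation :: "'v set \<Rightarrow> ('v \<times> 'p block) set \<Rightarrow> bool" where
  "safety_violation V votes \<longleftrightarrow>
     (\<exists>B B'. finalized V votes B \<and> finalized V votes B' \<and> conflicting B B')"

definition violates_slashing :: "('v \<times> 'p block) set \<Rightarrow> 'v \<Rightarrow> bool" where
  "violates_slashing votes v \<longleftrightarrow>
     (\<exists>B1 B2. (v, B1) \<in> votes \<and> (v, B2) \<in> votes \<and> B1 \<noteq> B2 \<and> epoch B1 = epoch B2) \<or>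
     (\<exists>B1 B2. (v, B1) \<in> votes \<and> (v, B2) \<in> votes \<and> epoch B1 < epoch B2 \<and> depth B1 > depth B2)"

text \<open>seen v e is the set of tips of the notarized chains validator v has seen at the moment
  it votes in epoch e (views only grow; arbitrary, partially synchronous message delays are
  allowed). An honest validator votes only for the proposal of the current epoch, at most once
  per epoch, and only if the proposal directly extends one of the longest notarized chains it
  has seen.\<close>

definition honest_validator ::
  "'v set \<Rightarrow> ('v \<times> 'p block) set \<Rightarrow> ('v \<Rightarrow> nat \<Rightarrow> 'p block set) \<Rightarrow> 'v \<Rightarrow> bool" where
  "honest_validator V votes seen v \<longleftrightarrow>
     (\<forall>e. genesis \<in> seen v e \<and> finite (seen v e) \<and>
          (\<forall>C \<in> seen v e. notarized_chain V votes C)) \<and>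
     (\<forall>e e'. e \<le> e' \<longrightarrow> seen v e \<subseteq> seen v e') \<and>
     (\<forall>B. (v, B) \<in> votes \<longrightarrow>
          parent B \<in> seen v (epoch B) \<and>
          (\<forall>C \<in> seen v (epoch B). depth C \<le> depth (parent B))) \<and>
     (\<forall>B B'. (v, B) \<in> votes \<longrightarrow> (v, B') \<in> votes \<longrightarrow> epoch B = epoch B' \<longrightarrow> B = B')"

text \<open>An execution with validator set V (n = card V), honest validators H (the others are
  Byzantine and may vote arbitrarily).\<close>
definition streamlet_execution ::
  "'v set \<Rightarrow> 'v set \<Rightarrow> ('v \<times> 'p block) set \<Rightarrow> ('v \<Rightarrow> nat \<Rightarrow> 'p block set) \<Rightarrow> bool" where
  "streamlet_execution V H votes seen \<longleftrightarrow>
     finite V \<and> H \<subseteq> V \<and>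
     (\<forall>(v, B) \<in> votes. v \<in> V \<and> B \<noteq> genesis \<and> epoch B \<ge> 1) \<and>
     (\<forall>v \<in> H. honest_validator V votes seen v)"

text \<open>alpha-accountable safety for one execution: a safety violation lets us irrefutably
  accuse (from the signed votes) at least alpha * n validators of violating a slashing
  condition, and honest validators never violate the slashing conditions.\<close>
definition accountable_safety :: "real \<Rightarrow> 'v set \<Rightarrow> 'v set \<Rightarrow> ('v \<times> 'p block) set \<Rightarrow> bool" where
  "accountable_safety \<alpha> V H votes \<longleftrightarrow>
     (safety_violation V votes \<longrightarrow> \<alpha> * real (card V) \<le> real (card {v \<in> V. violates_slashing votes v})) \<and>
     (\<forall>v \<in> H. \<not> violates_slashing votes v)"

end

theory Submission
  imports Defs
begin

lemma quorum_inter: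
  assumes fin: "finite V" and "notarized V votes X" and "notarized V votes Y"
  shows "real (card V) / 3 \<le> real (card {v \<in> V. (v, X) \<in> votes \<and> (v, Y) \<in> votes})"
proof -
  let ?A = "{v \<in> V. (v, X) \<in> votes}" and ?B = "{v \<in> V. (v, Y) \<in> votes}"
  have eq: "{v \<in> V. (v, X) \<in> votes \<and> (v, Y) \<in> votes} = ?A \<inter> ?B" by auto
  have fA: "finite ?A" "finite ?B" using fin by auto
  have "card (?A \<union> ?B) \<le> card V" using fin by (intro card_mono) auto
  moreover have "card (?A \<union> ?B) + card (?A \<inter> ?B) = card ?A + card ?B"
    using card_Un_Int[OF fA] by simp
  ultimately have "3 * card (?A \<inter> ?B) \<ge> card V" using assms(2,3)
    unfolding notarized_def by linarith
  then show ?thesis unfolding eq by linarith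
qed

lemma notarized_epoch:
  assumes "finite V" "card V > 0" "notarized V votes X"
    and "\<forall>(v, B) \<in> votes. v \<in> V \<and> B \<noteq> genesis \<and> epoch B \<ge> 1"
  shows "epoch X \<ge> 1"
proof -
  have "card {v \<in> V. (v, X) \<in> votes} > 0" using assms(2,3) unfolding notarized_def by linarith
  then obtain v where "(v, X) \<in> votes" by (metis (no_types, lifting) card.empty empty_Collect_eq less_irrefl)
  then show ?thesis using assms(4) by auto
qed

lemma main_chain:
  fixes N :: "'p block \<Rightarrow> bool"
  assumes NV: "\<And>X Y. N X \<Longrightarrow> N Y \<Longrightarrow> epoch X = epoch Y \<Longrightarrow> X = Y"
    and NM: "\<And>X Y. N X \<Longrightarrow> N Y \<Longrightarrow> epoch X < epoch Y \<Longrightarrow> length X \<le> length Y"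
    and chC: "\<And>X. prefix X C \<Longrightarrow> N X"
    and chC': "\<And>X. prefix X C' \<Longrightarrow> N X"
    and M: "M = butlast C" "M \<noteq> []" "epoch (butlast M) + 1 = epoch M" "epoch M + 1 = epoch C"
    and M': "M' = butlast C'" "epoch M' + 1 = epoch C'"
    and lt: "epoch M < epoch M'"
  shows "prefix M C'"
proof -
  define e where "e = epoch M"
  have ex: "\<exists>k. epoch (take k C') > e + 1" using M' lt e_def by (intro exI[of _ "length C'"]) auto
  define k where "k = (LEAST k. epoch (take k C') > e + 1)"
  have kQ: "epoch (take k C') > e + 1" unfolding k_def by (rule LeastI_ex[OF ex])
  have k0: "k > 0" using kQ by (cases k) (auto simp: epoch_def)
  have kR: "\<not> epoch (take (k - 1) C') > e + 1" unfolding k_def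
    using not_less_Least k0 k_def by (metis diff_less zero_less_one)
  have kl: "k \<le> length C'"
  proof (rule ccontr)
    assume "\<not> k \<le> length C'"
    then have "take k C' = C'" "take (k-1) C' = C'" by auto
    with kQ kR show False by simp
  qed
  define R where "R = take (k - 1) C'"
  define Q where "Q = take k C'"
  have NR: "N R" and NQ: "N Q" unfolding R_def Q_def by (auto intro: chC' take_is_prefix)
  have lQ: "length Q = k" "length R = k - 1" using kl unfolding Q_def R_def by auto
  have pC: "prefix M C" "prefix (butlast M) C" using M(1)
    by (auto intro: prefix_order.trans prefixeq_butlast)
  have NC: "N C" "N M" "N (butlast M)" using pC by (auto intro: chC)
  have lC: "length M = length C - 1" "length (butlast M) = length M - 1" "length C \<ge> 2"
    using M(1,2) by (auto, cases C rule: rev_cases, auto simp: Suc_le_eq)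
  have RC: "prefix R C'" unfolding R_def by (rule take_is_prefix)
  consider "epoch R = e + 1" | "epoch R = e" | "epoch R < e" using kR unfolding R_def by linarith
  then show ?thesis
  proof cases
    case 1
    then have "R = C" using NV[OF NR NC(1)] M(4) e_def by simp
    then show ?thesis using RC pC(1) by (auto intro: prefix_order.trans)
  next
    case 2
    then have "R = M" using NV[OF NR NC(2)] e_def by simp
    then show ?thesis using RC by simp
  next
    case 3
    then have "epoch R \<le> epoch (butlast M)" using M(3) e_def by simp
    then have "length R \<le> length (butlast M)"
      using NV[OF NR NC(3)] NM[OF NR NC(3)] by (cases "epoch R = epoch (butlast M)") auto
    moreover have "length C \<le> length Q" using NM[OF NC(1) NQ] kQ M(4) e_def Q_def by simp
    ultimately show ?thesis using lQ lC k0 by simp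
  qed
qed

lemma depth_parent: "B \<noteq> [] \<Longrightarrow> depth B = depth (parent B) + 1"
  by (simp add: depth_def parent_def)

lemma honest_part:
  assumes "honest_validator V votes seen v" "\<forall>(v, B) \<in> votes. v \<in> V \<and> B \<noteq> genesis \<and> epoch B \<ge> 1"
  shows "\<not> violates_slashing votes v"
proof -
  have A1: "\<forall>e e'. e \<le> e' \<longrightarrow> seen v e \<subseteq> seen v e'"
   and A2: "\<forall>B. (v, B) \<in> votes \<longrightarrow>
          parent B \<in> seen v (epoch B) \<and>
          (\<forall>C \<in> seen v (epoch B). depth C \<le> depth (parent B))"
   and A3: "\<forall>B B'. (v, B) \<in> votes \<longrightarrow> (v, B') \<in> votes \<longrightarrow> epoch B = epoch B' \<longrightarrow> B = B'"
    using assms(1) unfolding honest_validator_def by simp_all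
  have h2: "\<not> (depth B1 > depth B2)" if "(v, B1) \<in> votes" "(v, B2) \<in> votes" "epoch B1 < epoch B2" for B1 B2
  proof -
    have "parent B1 \<in> seen v (epoch B1)" using A2 that(1) by simp
    moreover have "seen v (epoch B1) \<subseteq> seen v (epoch B2)"
      using A1 that(3) by simp
    ultimately have "parent B1 \<in> seen v (epoch B2)" by (rule subsetD[rotated])
    then have "depth (parent B1) \<le> depth (parent B2)"
      using A2 that(2) by simp
    moreover have "B1 \<noteq> []" "B2 \<noteq> []" using assms(2) that(1,2) by (auto simp: genesis_def)
    ultimately show ?thesis using depth_parent[of B1] depth_parent[of B2] by simp
  qed
  have h1: "\<not> ((v, B1) \<in> votes \<and> (v, B2) \<in> votes \<and> B1 \<noteq> B2 \<and> epoch B1 = epoch B2)" for B1 B2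
    using A3 by metis
  show ?thesis unfolding violates_slashing_def using h1 h2 by (metis not_less)
qed

theorem theorem2:
  fixes V H :: "'v set" and votes :: "('v \<times> 'p block) set"
    and seen :: "'v \<Rightarrow> nat \<Rightarrow> 'p block set"
  assumes "streamlet_execution V H votes seen"
  shows "accountable_safety (1/3) V H votes"
proof -
  have all: "finite V \<and> H \<subseteq> V \<and>
     (\<forall>(v, B) \<in> votes. v \<in> V \<and> B \<noteq> genesis \<and> epoch B \<ge> 1) \<and>
     (\<forall>v \<in> H. honest_validator V votes seen v)"
    using assms unfolding streamlet_execution_def .
  have fin: "finite V" using all by (rule conjunct1)
  have vv: "\<forall>(v, B) \<in> votes. v \<in> V \<and> B \<noteq> genesis \<and> epoch B \<ge> 1"
    using all by (elim conjE)
  have hon: "\<forall>v \<in> H. honest_validator V votes seen v" using all by (elim conjE)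
  have part2: "\<forall>v \<in> H. \<not> violates_slashing votes v"
  proof
    fix v assume "v \<in> H"
    then show "\<not> violates_slashing votes v" using honest_part[OF _ vv, of seen v] hon by simp
  qed
  have part1: "1/3 * real (card V) \<le> real (card {v \<in> V. violates_slashing votes v})"
    if sv: "safety_violation V votes"
  proof (cases "card V = 0")
    case True then show ?thesis by simp
  next
    case False
    then have cV: "card V > 0" by simp
    show ?thesis
    proof (cases "\<exists>X Y. notarized V votes X \<and> notarized V votes Y \<and>
        ((X \<noteq> Y \<and> epoch X = epoch Y) \<or> (epoch X < epoch Y \<and> depth X > depth Y))")
      case True
      then obtain X Y where XY: "notarized V votes X" "notarized V votes Y"
        "(X \<noteq> Y \<and> epoch X = epoch Y) \<or> (epoch X < epoch Y \<and> depth X > depth Y)" by blast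
      have vs: "violates_slashing votes v" if "(v, X) \<in> votes" "(v, Y) \<in> votes" for v
        using XY(3)
      proof
        assume "X \<noteq> Y \<and> epoch X = epoch Y"
        then show ?thesis unfolding violates_slashing_def
          by (intro disjI1 exI[of _ X] exI[of _ Y]) (simp add: that)
      next
        assume "epoch X < epoch Y \<and> depth X > depth Y"
        then show ?thesis unfolding violates_slashing_def
          by (intro disjI2 exI[of _ X] exI[of _ Y]) (simp add: that)
      qed
      have sub: "{v \<in> V. (v, X) \<in> votes \<and> (v, Y) \<in> votes} \<subseteq> {v \<in> V. violates_slashing votes v}"
        using vs by auto
      have "card {v \<in> V. (v, X) \<in> votes \<and> (v, Y) \<in> votes} \<le> card {v \<in> V. violates_slashing votes v}"
        using fin by (intro card_mono[OF _ sub]) auto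
      with quorum_inter[OF fin XY(1,2)] show ?thesis by simp
    next
      case False
      have noV: "X = Y" if "notarized V votes X" "notarized V votes Y" "epoch X = epoch Y" for X Y
        using False that by meson
      have noM: "\<not> depth X > depth Y" if "notarized V votes X" "notarized V votes Y" "epoch X < epoch Y" for X Y
        using False that by meson
      define N where "N X \<longleftrightarrow> X = [] \<or> notarized V votes X" for X :: "'p block"
      have ep: "epoch X \<ge> 1" if "notarized V votes X" for X
        using notarized_epoch[OF fin cV that vv] .
      have e0: "epoch ([] :: 'p block) = 0" by (simp add: epoch_def)
      have NV: "X = Y" if h: "N X" "N Y" "epoch X = epoch Y" for X Y
      proof -
        consider "X = []" "Y = []" | "X = []" "notarized V votes Y" | "notarized V votes X" "Y = []"
          | "notarized V votes X" "notarized V votes Y" using h(1,2) unfolding N_def by blast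
        then show ?thesis
        proof cases
          case 2 then show ?thesis using ep[of Y] h(3) e0 by simp
        next
          case 3 then show ?thesis using ep[of X] h(3) e0 by simp
        next
          case 4 then show ?thesis using noV h(3) by simp
        qed simp
      qed
      have NM: "length X \<le> length Y" if h: "N X" "N Y" "epoch X < epoch Y" for X Y
      proof -
        consider "X = []" | "notarized V votes X" "Y = []"
          | "notarized V votes X" "notarized V votes Y" using h(1,2) unfolding N_def by blast
        then show ?thesis
        proof cases
          case 2 then show ?thesis using h(3) e0 by simp
        next
          case 3
          then have "\<not> depth X > depth Y" using noM h(3) by simp
          then show ?thesis by (simp add: depth_def)
        qed simp
      qed
      have chN: "N X" if "notarized_chain V votes C" "prefix X C" for X C
      proof (cases "X = []")
        case False
        then have "notarized V votes X" using that unfolding notarized_chain_def genesis_def by simp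
        then show ?thesis unfolding N_def by simp
      qed (simp add: N_def)
      have fm: "\<exists>C. notarized_chain V votes C \<and> C \<noteq> [] \<and> butlast C = M \<and>
            epoch (butlast M) + 1 = epoch M \<and> epoch M + 1 = epoch C" "M \<noteq> []"
        if "finalizing_middle V votes M" for M
        using that unfolding finalizing_middle_def parent_def genesis_def by simp_all
      obtain B B' where BB: "finalized V votes B" "finalized V votes B'" "conflicting B B'"
        using sv unfolding safety_violation_def by blast
      obtain M M' where MM: "finalizing_middle V votes M" "prefix B M"
          "finalizing_middle V votes M'" "prefix B' M'"
        using BB unfolding finalized_def by blast
      have NMid: "N M" if h: "finalizing_middle V votes M" for M
      proof -
        obtain C where C: "notarized_chain V votes C" "butlast C = M"
          using fm(1)[OF h] by blast
        show ?thesis using chN[OF C(1)] C(2) prefixeq_butlast by blast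
      qed
      have comp: "prefix M C'" if h: "finalizing_middle V votes M" "butlast C' = M'" "notarized_chain V votes C'"
          "epoch M' + 1 = epoch C'" "epoch M < epoch M'" for M M' C'
      proof -
        obtain C where C: "notarized_chain V votes C" "C \<noteq> []" "butlast C = M"
            "epoch (butlast M) + 1 = epoch M" "epoch M + 1 = epoch C"
          using fm(1)[OF h(1)] by blast
        have C6: "M \<noteq> []" using fm(2)[OF h(1)] .
        have chC: "N X" if "prefix X C" for X using chN[OF C(1) that] .
        have chC': "N X" if "prefix X C'" for X using chN[OF h(3) \<open>prefix X C'\<close>] .
        show "prefix M C'"
          using main_chain[where N=N and C=C and M'=M' and C'=C' and M=M, OF NV NM chC chC'
            C(3)[symmetric] C6 C(4) C(5) h(2)[symmetric] h(4) h(5)] .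
      qed
      have comp2: "prefix M M' \<or> prefix M' M"
        if h: "finalizing_middle V votes M" "finalizing_middle V votes M'" "epoch M < epoch M'" for M M'
      proof -
        obtain C' where C': "notarized_chain V votes C'" "C' \<noteq> []" "butlast C' = M'"
            "epoch M' + 1 = epoch C'"
          using fm(1)[OF h(2)] by blast
        have "prefix M C'" using comp[OF h(1) C'(3) C'(1) C'(4) h(3)] .
        moreover have "prefix M' C'" using C'(3) prefixeq_butlast by blast
        ultimately show ?thesis using prefix_same_cases by blast
      qed
      have "prefix M M' \<or> prefix M' M"
      proof (cases "epoch M = epoch M'")
        case True
        then show ?thesis using NV[OF NMid[OF MM(1)] NMid[OF MM(3)]] by simp
      next
        case False
        then have "epoch M < epoch M' \<or> epoch M' < epoch M" by arith
        then show ?thesis using comp2 MM(1,3) by blast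
      qed
      then have "prefix B M' \<or> prefix B' M"
        using MM(2,4) prefix_order.trans by blast
      then have "prefix B B' \<or> prefix B' B"
        using MM(2,4) prefix_same_cases by blast
      then show ?thesis using BB(3) unfolding conflicting_def by blast
    qed
  qed
  show ?thesis unfolding accountable_safety_def using part1 part2 by simp
qed

end
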